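(* For all integers $r\ge1$ and $n\ge 1$, \[K_{A_r}(n\tilde\alpha_{A_r})=\mathsf{js}(\langle n\rangle,\langle n\rangle,r),\] where $\tilde\alpha_{A_r}=\varepsilon_1-\varepsilon_{r+1}$.
   Context: A juggling state is a finitely supported integer vector $\mathbf{s}=\langle s_1,s_2,\dots\rangle$ indexed by heights (trailing zeros omitted). A juggling sequence of length $n$ from $\mathbf{a}$ to $\mathbf{b}$ is a sequence $(\mathbf{s}_0,\dots,\mathbf{s}_n)$ with $\mathbf{s}_0=\mathbf{a}$, $\mathbf{s}_n=\mathbf{b}$, such that for each $i$ there are nonnegative integers $c^{(i)}_k$ (finitely many nonzero) with $\sum_k c^{(i)}_k=(\mathbf{s}_{i-1})_1$ and $(\mathbf{s}_i)_k=(\mathbf{s}_{i-1})_{k+1}+c^{(i)}_k$ for all $k\ge1$. $\mathsf{js}(\mathbf{a},\mathbf{b},n)$ is the number of such sequences. $\Phi^+_{A_r}=\{\varepsilon_i-\varepsilon_j:1\le i<j\le r+1\}\subset\mathbb{R}^{r+1}$; $K_{A_r}(\mu)$ is the number of finite multisets of elements of $\Phi^+_{A_r}$ summing to $\mu$. *)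

theory Defs
  imports Main "HOL-Library.Multiset" "HOL-Library.Function_Algebras"
begin

text \<open>Juggling states: finitely supported integer vectors indexed by heights 1,2,...;
  represented as functions nat => int, with the unused index 0 set to 0.\<close>

definition juggling_state :: "(nat \<Rightarrow> int) \<Rightarrow> bool" where
  "juggling_state s \<longleftrightarrow> s 0 = 0 \<and> finite {k. s k \<noteq> 0}"

definition js_step :: "(nat \<Rightarrow> int) \<Rightarrow> (nat \<Rightarrow> int) \<Rightarrow> bool" where
  "js_step s t \<longleftrightarrow>
     (\<exists>c :: nat \<Rightarrow> nat. c 0 = 0 \<and> finite {k. c k \<noteq> 0} \<and>
        int (\<Sum>k\<in>{k. c k \<noteq> 0}. c k) = s 1 \<and>
        (\<forall>k\<ge>1. t k = s (k + 1) + int (c k)))"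

definition js :: "(nat \<Rightarrow> int) \<Rightarrow> (nat \<Rightarrow> int) \<Rightarrow> nat \<Rightarrow> nat" where
  "js a b n = card {ss :: (nat \<Rightarrow> int) list.
      length ss = n + 1 \<and> ss ! 0 = a \<and> ss ! n = b \<and>
      (\<forall>i\<le>n. juggling_state (ss ! i)) \<and>
      (\<forall>i<n. js_step (ss ! i) (ss ! (i + 1)))}"

definition single_state :: "nat \<Rightarrow> (nat \<Rightarrow> int)" where
  "single_state m = (\<lambda>k. if k = 1 then int m else 0)"

text \<open>Vectors in R^(r+1) with integer coordinates, coordinates indexed 1..r+1
  (functions nat => int vanishing outside 1..r+1). eps i is the standard basis vector.\<close>
definition eps :: "nat \<Rightarrow> (nat \<Rightarrow> int)" where
  "eps i = (\<lambda>k. if k = i then 1 else 0)"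

definition pos_roots_A :: "nat \<Rightarrow> (nat \<Rightarrow> int) set" where
  "pos_roots_A r = {eps i - eps j | i j. 1 \<le> i \<and> i < j \<and> j \<le> r + 1}"

definition kostant_A :: "nat \<Rightarrow> (nat \<Rightarrow> int) \<Rightarrow> nat" where
  "kostant_A r mu = card {M :: (nat \<Rightarrow> int) multiset.
      set_mset M \<subseteq> pos_roots_A r \<and> sum_mset M = mu}"

end

theory Submission
  imports Defs
begin


definition supp_ok :: "nat \<Rightarrow> (nat \<Rightarrow> nat \<Rightarrow> nat) \<Rightarrow> bool" where
  "supp_ok r m \<longleftrightarrow> (\<forall>i j. m i j \<noteq> 0 \<longrightarrow> 1 \<le> i \<and> i < j \<and> j \<le> r + 1)"

definition outf :: "nat \<Rightarrow> (nat \<Rightarrow> nat \<Rightarrow> nat) \<Rightarrow> nat \<Rightarrow> nat" where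
  "outf r m i = (\<Sum>j\<le>r+1. m i j)"
definition inflow :: "nat \<Rightarrow> (nat \<Rightarrow> nat \<Rightarrow> nat) \<Rightarrow> nat \<Rightarrow> nat" where
  "inflow r m j = (\<Sum>i\<le>r+1. m i j)"

definition Fl :: "nat \<Rightarrow> nat \<Rightarrow> (nat \<Rightarrow> nat \<Rightarrow> nat) set" where
  "Fl r n = {m. supp_ok r m \<and> (\<forall>k. int (outf r m k) - int (inflow r m k) = int n * (eps 1 k - eps (r+1) k))}"

definition gK :: "nat \<Rightarrow> (nat \<Rightarrow> nat \<Rightarrow> nat) \<Rightarrow> (nat \<Rightarrow> int) multiset" where
  "gK r m = (\<Sum>i\<le>r+1. \<Sum>j\<le>r+1. replicate_mset (m i j) (eps i - eps j))"

definition fK :: "nat \<Rightarrow> (nat \<Rightarrow> int) multiset \<Rightarrow> (nat \<Rightarrow> nat \<Rightarrow> nat)" where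
  "fK r M = (\<lambda>i j. if 1 \<le> i \<and> i < j \<and> j \<le> r + 1 then count M (eps i - eps j) else 0)"

lemma sum_mset_sum: "finite A \<Longrightarrow> sum_mset (\<Sum>a\<in>A. F a) = (\<Sum>a\<in>A. sum_mset (F a))"
  by (induction A rule: finite_induct) auto

lemma fun_sum_apply: "(\<Sum>a\<in>A. (F a :: nat \<Rightarrow> int)) k = (\<Sum>a\<in>A. F a k)"
  by (induction A rule: infinite_finite_induct) auto

lemma gK_sum: "supp_ok r m \<Longrightarrow> sum_mset (gK r m) k = int (outf r m k) - int (inflow r m k)"
proof -
  assume s: "supp_ok r m"
  have "sum_mset (gK r m) k = (\<Sum>i\<le>r+1. \<Sum>j\<le>r+1. int (m i j) * (eps i k - eps j k))"
    unfolding gK_def by (simp add: sum_mset_sum fun_sum_apply)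
  also have "\<dots> = (\<Sum>i\<le>r+1. \<Sum>j\<le>r+1. (if i = k then int (m i j) else 0))
                 - (\<Sum>i\<le>r+1. \<Sum>j\<le>r+1. (if j = k then int (m i j) else 0))"
  proof -
    have "\<And>i j. int (m i j) * (eps i k - eps j k) = (if i = k then int (m i j) else 0) - (if j = k then int (m i j) else 0)"
      by (simp add: eps_def)
    then show ?thesis by (simp only: sum_subtractf)
  qed
  also have "(\<Sum>i\<le>r+1. \<Sum>j\<le>r+1. (if i = k then int (m i j) else 0)) = int (outf r m k)"
  proof (cases "k \<le> r+1")
    case True then show ?thesis
    proof -
      have "(\<Sum>i\<le>r+1. \<Sum>j\<le>r+1. (if i = k then int (m i j) else 0)) = (\<Sum>i\<le>r+1. (if i = k then (\<Sum>j\<le>r+1. int (m i j)) else 0))"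
        by (rule sum.cong) auto
      also have "\<dots> = (\<Sum>j\<le>r+1. int (m k j))" using True by (subst sum.delta) auto
      finally show ?thesis by (simp add: outf_def)
    qed
  next
    case False
    then have "\<forall>j. m k j = 0" using s unfolding supp_ok_def by force
    then show ?thesis using False by (simp add: outf_def)
  qed
  also have "(\<Sum>i\<le>r+1. \<Sum>j\<le>r+1. (if j = k then int (m i j) else 0)) = int (inflow r m k)"
  proof (cases "k \<le> r+1")
    case True then show ?thesis
      by (simp add: inflow_def)
  next
    case False
    then have "\<forall>i. m i k = 0" using s unfolding supp_ok_def by force
    then show ?thesis using False by (simp add: inflow_def)
  qed
  finally show ?thesis .
qed

lemma count_gK: "count (gK r m) x = (\<Sum>i\<le>r+1. \<Sum>j\<le>r+1. (if x = eps i - eps j then m i j else 0))"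
  unfolding gK_def by (simp add: count_sum)

lemma eps_inj:
  assumes "i < j" "a < b" "eps a - eps b = eps i - eps j"
  shows "a = i \<and> b = j"
proof -
  have 1: "eps a i - eps b i = 1" using fun_cong[OF assms(3), of i] assms by (simp add: eps_def)
  have 2: "eps a j - eps b j = -1" using fun_cong[OF assms(3), of j] assms by (simp add: eps_def)
  from 1 have "a = i" by (simp add: eps_def split: if_splits)
  moreover from 2 have "b = j" by (simp add: eps_def split: if_splits)
  ultimately show ?thesis by simp
qed

lemma count_gK_root:
  assumes s: "supp_ok r m" and ij: "1 \<le> i" "i < j" "j \<le> r+1"
  shows "count (gK r m) (eps i - eps j) = m i j"
proof -
  have t: "(if eps i - eps j = eps a - eps b then m a b else 0) = (if a = i then (if b = j then m a b else 0) else 0)" for a b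
  proof (cases "m a b = 0")
    case False
    then have "a < b" using s unfolding supp_ok_def by auto
    then show ?thesis using eps_inj[of i j a b] ij by auto
  qed auto
  have "count (gK r m) (eps i - eps j) = (\<Sum>a\<le>r+1. (if a = i then (\<Sum>b\<le>r+1. (if b = j then m a b else 0)) else 0))"
    unfolding count_gK t by (rule sum.cong) auto
  also have "\<dots> = (\<Sum>b\<le>r+1. (if b = j then m i b else 0))" using ij by (subst sum.delta) auto
  also have "\<dots> = m i j" using ij by (subst sum.delta) auto
  finally show ?thesis .
qed

lemma count_gK_nonroot:
  assumes s: "supp_ok r m" and x: "x \<notin> pos_roots_A r"
  shows "count (gK r m) x = 0"
proof -
  have "(if x = eps a - eps b then m a b else 0) = 0" for a b
  proof (cases "m a b = 0")
    case False
    then have "1 \<le> a \<and> a < b \<and> b \<le> r+1" using s unfolding supp_ok_def by auto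
    then have "eps a - eps b \<in> pos_roots_A r" unfolding pos_roots_A_def by blast
    then show ?thesis using x by auto
  qed simp
  then show ?thesis unfolding count_gK by simp
qed

definition KS :: "nat \<Rightarrow> (nat \<Rightarrow> int) \<Rightarrow> (nat \<Rightarrow> int) multiset set" where
  "KS r mu = {M. set_mset M \<subseteq> pos_roots_A r \<and> sum_mset M = mu}"

lemma supp_fK: "supp_ok r (fK r M)"
  unfolding supp_ok_def fK_def by auto

lemma gK_fK:
  assumes "set_mset M \<subseteq> pos_roots_A r"
  shows "gK r (fK r M) = M"
proof (rule multiset_eqI)
  fix x
  show "count (gK r (fK r M)) x = count M x"
  proof (cases "x \<in> pos_roots_A r")
    case True
    then obtain i j where ij: "1 \<le> i" "i < j" "j \<le> r+1" and x: "x = eps i - eps j"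
      unfolding pos_roots_A_def by blast
    show ?thesis using count_gK_root[OF supp_fK ij] ij x by (simp add: fK_def)
  next
    case False
    then have "count M x = 0" using assms by (meson count_inI subsetD)
    then show ?thesis using count_gK_nonroot[OF supp_fK False] by simp
  qed
qed

lemma fK_gK:
  assumes "supp_ok r m"
  shows "fK r (gK r m) = m"
proof (intro ext)
  fix i j
  show "fK r (gK r m) i j = m i j"
  proof (cases "1 \<le> i \<and> i < j \<and> j \<le> r + 1")
    case True
    then show ?thesis using count_gK_root[OF assms] by (simp add: fK_def)
  next
    case False
    then show ?thesis using assms unfolding supp_ok_def fK_def by auto
  qed
qed

lemma K_bij:
  "bij_betw (fK r) (KS r (\<lambda>k. int n * (eps 1 k - eps (r + 1) k))) (Fl r n)"
proof (rule bij_betw_byWitness[where f'="gK r"])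
  show "\<forall>a\<in>KS r (\<lambda>k. int n * (eps 1 k - eps (r + 1) k)). gK r (fK r a) = a"
    unfolding KS_def using gK_fK by blast
  show "\<forall>a'\<in>Fl r n. fK r (gK r a') = a'"
    unfolding Fl_def using fK_gK by blast
  show "fK r ` KS r (\<lambda>k. int n * (eps 1 k - eps (r + 1) k)) \<subseteq> Fl r n"
  proof
    fix m assume "m \<in> fK r ` KS r (\<lambda>k. int n * (eps 1 k - eps (r + 1) k))"
    then obtain M where M: "set_mset M \<subseteq> pos_roots_A r" "sum_mset M = (\<lambda>k. int n * (eps 1 k - eps (r + 1) k))"
      and m: "m = fK r M" unfolding KS_def by blast
    have "int (outf r m k) - int (inflow r m k) = int n * (eps 1 k - eps (r+1) k)" for k
    proof -
      have "int (outf r m k) - int (inflow r m k) = sum_mset (gK r (fK r M)) k" using gK_sum[OF supp_fK, of r M k] m by simp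
      also have "\<dots> = sum_mset M k" using gK_fK[OF M(1)] by simp
      finally show ?thesis using M(2) by simp
    qed
    then show "m \<in> Fl r n" unfolding Fl_def using supp_fK m by blast
  qed
  show "gK r ` Fl r n \<subseteq> KS r (\<lambda>k. int n * (eps 1 k - eps (r + 1) k))"
  proof
    fix M assume "M \<in> gK r ` Fl r n"
    then obtain m where m: "m \<in> Fl r n" and M: "M = gK r m" by blast
    have s: "supp_ok r m" using m unfolding Fl_def by blast
    have "set_mset M \<subseteq> pos_roots_A r"
    proof
      fix x assume "x \<in># M"
      then have "count (gK r m) x \<noteq> 0" using M by simp
      then show "x \<in> pos_roots_A r" using count_gK_nonroot[OF s, of x] by argo
    qed
    moreover have "sum_mset M = (\<lambda>k. int n * (eps 1 k - eps (r + 1) k))"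
    proof
      fix k
      have c: "int (outf r m k) - int (inflow r m k) = int n * (eps 1 k - eps (r+1) k)"
        using m unfolding Fl_def by blast
      show "sum_mset M k = int n * (eps 1 k - eps (r + 1) k)"
        unfolding M using trans[OF gK_sum[OF s, of k] c] .
    qed
    ultimately show "M \<in> KS r (\<lambda>k. int n * (eps 1 k - eps (r + 1) k))" unfolding KS_def by simp
  qed
qed



lemma sum_nz: "{k. c k \<noteq> 0} \<subseteq> A \<Longrightarrow> finite A \<Longrightarrow> sum c {k. c k \<noteq> 0} = sum (c :: nat \<Rightarrow> nat) A"
  by (rule sum.mono_neutral_left) auto

lemma S1:
  assumes s: "supp_ok r m" and t: "1 \<le> t"
  shows "(\<Sum>k\<in>{k. m t (t+k) \<noteq> 0}. m t (t+k)) = outf r m t"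
proof -
  have sub: "{j. m t j \<noteq> 0} \<subseteq> {..r+1}" using s unfolding supp_ok_def by auto
  have "outf r m t = (\<Sum>j\<in>{j. m t j \<noteq> 0}. m t j)"
    unfolding outf_def using sum_nz[OF sub] by simp
  also have "\<dots> = (\<Sum>k\<in>{k. m t (t+k) \<noteq> 0}. m t (t+k))"
    apply (rule sum.reindex_bij_witness[where i="\<lambda>k. t + k" and j="\<lambda>j. j - t"])
    using s unfolding supp_ok_def by (auto simp: less_imp_le_nat)
  finally show ?thesis by simp
qed

lemma S2:
  assumes s: "supp_ok r m" and t: "t \<le> r"
  shows "(\<Sum>i\<in>{1..t}. m i (t+1)) = inflow r m (t+1)"
  unfolding inflow_def
proof (rule sum.mono_neutral_left)
  show "finite {..r+1}" by simp
  show "{1..t} \<subseteq> {..r+1}" using t by auto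
  show "\<forall>i\<in>{..r + 1} - {1..t}. m i (t + 1) = 0"
  proof
    fix i assume i: "i \<in> {..r + 1} - {1..t}"
    have "m i (t+1) \<noteq> 0 \<Longrightarrow> 1 \<le> i \<and> i < t+1" using s unfolding supp_ok_def by blast
    then show "m i (t + 1) = 0" using i by force
  qed
qed

lemma outf_inf_zero:
  assumes s: "supp_ok r m" and k: "k = 0 \<or> r + 1 < k"
  shows "outf r m k = 0" "inflow r m k = 0"
proof -
  have "\<forall>j. m k j = 0" "\<forall>i. m i k = 0" using s k unfolding supp_ok_def by force+
  then show "outf r m k = 0" "inflow r m k = 0" unfolding outf_def inflow_def by simp_all
qed

lemma outf_last: "supp_ok r m \<Longrightarrow> outf r m (r+1) = 0"
proof -
  assume s: "supp_ok r m"
  have "\<forall>j. m (r+1) j = 0" using s unfolding supp_ok_def by force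
  then show ?thesis unfolding outf_def by simp
qed

definition st :: "nat \<Rightarrow> (nat \<Rightarrow> nat \<Rightarrow> nat) \<Rightarrow> nat \<Rightarrow> (nat \<Rightarrow> int)" where
  "st n m t = (\<lambda>k. if k = 0 then 0 else (if t = 0 \<and> k = 1 then int n else 0) + int (\<Sum>i\<in>{1..t}. m i (t+k)))"

lemma st_step: "1 \<le> k \<Longrightarrow> st n m (Suc t) k = st n m t (k+1) + int (m (t+1) (t+1+k))"
  unfolding st_def by (simp add: add.commute add.left_commute)


definition JSet :: "nat \<Rightarrow> nat \<Rightarrow> (nat \<Rightarrow> int) list set" where
  "JSet r n = {ss :: (nat \<Rightarrow> int) list.
      length ss = r + 1 \<and> ss ! 0 = single_state n \<and> ss ! r = single_state n \<and>
      (\<forall>i\<le>r. juggling_state (ss ! i)) \<and>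
      (\<forall>i<r. js_step (ss ! i) (ss ! (i + 1)))}"

lemma js_JSet: "js (single_state n) (single_state n) r = card (JSet r n)"
  unfolding js_def JSet_def by simp

definition psi :: "nat \<Rightarrow> nat \<Rightarrow> (nat \<Rightarrow> nat \<Rightarrow> nat) \<Rightarrow> (nat \<Rightarrow> int) list" where
  "psi n r m = map (st n m) [0..<r+1]"

lemma psi_nth: "t \<le> r \<Longrightarrow> psi n r m ! t = st n m t"
  unfolding psi_def by (simp del: upt_Suc)

lemma consF:
  assumes m: "m \<in> Fl r n" and k: "1 \<le> k" "k \<le> r"
  shows "outf r m k = (if k = 1 then n else 0) + inflow r m k"
proof -
  have "int (outf r m k) - int (inflow r m k) = int n * (eps 1 k - eps (r+1) k)"
    using m unfolding Fl_def by blast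
  moreover have "eps (r+1) k = 0" using k by (simp add: eps_def)
  ultimately show ?thesis by (cases "k = 1") (simp_all add: eps_def)
qed

lemma lastF:
  assumes m: "m \<in> Fl r n" and r: "1 \<le> r"
  shows "inflow r m (r+1) = n"
proof -
  have "int (outf r m (r+1)) - int (inflow r m (r+1)) = int n * (eps 1 (r+1) - eps (r+1) (r+1))"
    using m unfolding Fl_def by blast
  moreover have "outf r m (r+1) = 0" using outf_last m unfolding Fl_def by blast
  ultimately show ?thesis using r by (simp add: eps_def)
qed

lemma st_zero: "supp_ok r m \<Longrightarrow> r + 1 < t + k \<Longrightarrow> 1 < k \<or> t \<noteq> 0 \<Longrightarrow> st n m t k = 0"
proof -
  assume s: "supp_ok r m" and tk: "r + 1 < t + k" and o: "1 < k \<or> t \<noteq> 0"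
  have "\<forall>i. m i (t+k) = 0" using s tk unfolding supp_ok_def by force
  then show ?thesis unfolding st_def using o by auto
qed

lemma st_0: "st n m 0 = single_state n"
  unfolding st_def single_state_def by auto

lemma st_r:
  assumes m: "m \<in> Fl r n" and r: "1 \<le> r"
  shows "st n m r = single_state n"
proof
  fix k :: nat
  have s: "supp_ok r m" using m unfolding Fl_def by blast
  consider "k = 0" | "k = 1" | "1 < k" by arith
  then show "st n m r k = single_state n k"
  proof cases
    case 1 then show ?thesis by (simp add: st_def single_state_def)
  next
    case 2
    have "st n m r 1 = int (\<Sum>i\<in>{1..r}. m i (r+1))" using r by (simp add: st_def add.commute)
    also have "\<dots> = int n" using S2[OF s, of r] lastF[OF m r] by simp
    finally show ?thesis using 2 by (simp add: single_state_def)
  next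
    case 3 then show ?thesis using st_zero[OF s, of r k n] by (simp add: single_state_def)
  qed
qed

lemma st_jug: "supp_ok r m \<Longrightarrow> juggling_state (st n m t)"
proof -
  assume s: "supp_ok r m"
  have "{k. st n m t k \<noteq> 0} \<subseteq> {..r+1}"
  proof
    fix k assume "k \<in> {k. st n m t k \<noteq> 0}"
    then have "st n m t k \<noteq> 0" by simp
    show "k \<in> {..r+1}"
    proof (rule ccontr)
      assume "k \<notin> {..r+1}"
      then have "r + 1 < t + k" "1 < k" by auto
      then show False using st_zero[OF s, of t k n] \<open>st n m t k \<noteq> 0\<close> by blast
    qed
  qed
  then have "finite {k. st n m t k \<noteq> 0}" by (rule finite_subset) simp
  moreover have "st n m t 0 = 0" by (simp add: st_def)
  ultimately show ?thesis unfolding juggling_state_def by blast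
qed


lemma st_js_step:
  assumes m: "m \<in> Fl r n" and t: "t < r"
  shows "js_step (st n m t) (st n m (t+1))"
  unfolding js_step_def
proof (intro exI[where x="\<lambda>k. m (t+1) (t+1+k)"] conjI allI impI)
  have s: "supp_ok r m" using m unfolding Fl_def by blast
  have sk: "m (t+1) (t+1+k) \<noteq> 0 \<Longrightarrow> t+1 < t+1+k \<and> t+1+k \<le> r+1" for k
    using s unfolding supp_ok_def by blast
  show "m (t+1) (t+1+0) = 0"
  proof (rule ccontr)
    assume "m (t+1) (t+1+0) \<noteq> 0"
    then have "t+1 < t+1+0" using sk[of 0] by blast
    then show False by simp
  qed
  have "{k. m (t+1) (t+1+k) \<noteq> 0} \<subseteq> {..r+1}"
  proof
    fix k assume "k \<in> {k. m (t+1) (t+1+k) \<noteq> 0}"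
    then have "m (t+1) (t+1+k) \<noteq> 0" by simp
    then have "t+1+k \<le> r+1" using sk[of k] by blast
    then show "k \<in> {..r+1}" by simp
  qed
  then show "finite {k. m (t+1) (t+1+k) \<noteq> 0}" by (rule finite_subset) simp
  have "(\<Sum>k\<in>{k. m (t+1) (t+1+k) \<noteq> 0}. m (t+1) (t+1+k)) = outf r m (t+1)"
    using S1[OF s, of "t+1"] by simp
  also have "\<dots> = (if t = 0 then n else 0) + inflow r m (t+1)"
    using consF[OF m, of "t+1"] t by simp
  also have "\<dots> = (if t = 0 then n else 0) + (\<Sum>i\<in>{1..t}. m i (t+1))"
    using S2[OF s, of t] t by simp
  finally show "int (\<Sum>k\<in>{k. m (t+1) (t+1+k) \<noteq> 0}. m (t+1) (t+1+k)) = st n m t 1"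
    by (simp add: st_def)
next
  fix k :: nat assume "1 \<le> k"
  then show "st n m (t + 1) k = st n m t (k + 1) + int (m (t + 1) (t + 1 + k))"
    using st_step[of k n m t] by simp
qed
lemma psi_in:
  assumes m: "m \<in> Fl r n" and r: "1 \<le> r"
  shows "psi n r m \<in> JSet r n"
proof -
  have s: "supp_ok r m" using m unfolding Fl_def by blast
  have "length (psi n r m) = r + 1" unfolding psi_def by simp
  moreover have "psi n r m ! 0 = single_state n" using psi_nth[of 0 r n m] st_0 by simp
  moreover have "psi n r m ! r = single_state n" using psi_nth[of r r n m] st_r[OF m r] by simp
  moreover have "\<forall>i\<le>r. juggling_state (psi n r m ! i)" using psi_nth st_jug[OF s] by simp
  moreover have "\<forall>i<r. js_step (psi n r m ! i) (psi n r m ! (i + 1))"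
    using psi_nth st_js_step[OF m] by simp
  ultimately show ?thesis unfolding JSet_def by blast
qed

definition phi :: "nat \<Rightarrow> (nat \<Rightarrow> int) list \<Rightarrow> (nat \<Rightarrow> nat \<Rightarrow> nat)" where
  "phi r ss = (\<lambda>i j. if 1 \<le> i \<and> i < j \<and> j \<le> r + 1 then nat ((ss ! i) (j - i) - (ss ! (i - 1)) (j - i + 1)) else 0)"

lemma phi_psi:
  assumes m: "m \<in> Fl r n"
  shows "phi r (psi n r m) = m"
proof (intro ext)
  fix i j
  have s: "supp_ok r m" using m unfolding Fl_def by blast
  show "phi r (psi n r m) i j = m i j"
  proof (cases "1 \<le> i \<and> i < j \<and> j \<le> r + 1")
    case True
    then have "psi n r m ! i = st n m (Suc (i - 1))" "psi n r m ! (i - 1) = st n m (i - 1)"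
      using psi_nth[of i r n m] psi_nth[of "i-1" r n m] by auto
    moreover have "st n m (Suc (i - 1)) (j - i) = st n m (i - 1) (j - i + 1) + int (m (i - 1 + 1) (i - 1 + 1 + (j - i)))"
      using True by (intro st_step) auto
    moreover have "i - 1 + 1 = i" "i - 1 + 1 + (j - i) = j" using True by auto
    ultimately show ?thesis using True unfolding phi_def by simp
  next
    case False
    then show ?thesis using s unfolding phi_def supp_ok_def by auto
  qed
qed


lemma J_basic:
  assumes "ss \<in> JSet r n"
  shows "length ss = r + 1" "ss ! 0 = single_state n" "ss ! r = single_state n"
    "\<And>i. i \<le> r \<Longrightarrow> juggling_state (ss ! i)"
    "\<And>i. i < r \<Longrightarrow> js_step (ss ! i) (ss ! (i + 1))"
  using assms unfolding JSet_def by auto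

lemma J_step:
  assumes "ss \<in> JSet r n" "t < r"
  obtains c :: "nat \<Rightarrow> nat" where "c 0 = 0" "finite {k. c k \<noteq> 0}"
    "int (\<Sum>k\<in>{k. c k \<noteq> 0}. c k) = (ss ! t) 1"
    "\<And>k. 1 \<le> k \<Longrightarrow> (ss ! (t+1)) k = (ss ! t) (k + 1) + int (c k)"
  using J_basic(5)[OF assms] unfolding js_step_def by blast

lemma J_nonneg:
  assumes ss: "ss \<in> JSet r n"
  shows "t \<le> r \<Longrightarrow> 0 \<le> (ss ! t) k"
proof (induction t arbitrary: k)
  case 0
  then show ?case using J_basic(2)[OF ss] by (simp add: single_state_def)
next
  case (Suc t)
  show ?case
  proof (cases "k = 0")
    case True
    then show ?thesis using J_basic(4)[OF ss Suc.prems] unfolding juggling_state_def by simp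
  next
    case False
    obtain c :: "nat \<Rightarrow> nat" where c: "\<And>k. 1 \<le> k \<Longrightarrow> (ss ! (t+1)) k = (ss ! t) (k + 1) + int (c k)"
      using J_step[OF ss, of t] Suc.prems by auto
    have "0 \<le> (ss ! t) (k + 1)" using Suc.IH Suc.prems by simp
    then show ?thesis using c[of k] False by simp
  qed
qed

lemma J_mono:
  assumes ss: "ss \<in> JSet r n" and t: "t < r" and k: "1 \<le> k"
  shows "(ss ! t) (k + 1) \<le> (ss ! (t+1)) k"
proof -
  obtain c :: "nat \<Rightarrow> nat" where c: "\<And>k. 1 \<le> k \<Longrightarrow> (ss ! (t+1)) k = (ss ! t) (k + 1) + int (c k)"
    using J_step[OF ss t] by auto
  show ?thesis using c[OF k] by simp
qed

lemma J_vanish_aux: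
  assumes ss: "ss \<in> JSet r n"
  shows "d \<le> r \<Longrightarrow> r + 1 < (r - d) + k \<Longrightarrow> (ss ! (r - d)) k = 0"
proof (induction d arbitrary: k)
  case 0
  then show ?case using J_basic(3)[OF ss] by (simp add: single_state_def)
next
  case (Suc d)
  define t where "t = r - Suc d"
  have t1: "t + 1 = r - d" "t < r" using Suc.prems unfolding t_def by auto
  obtain k' where k': "k = Suc k'" "1 \<le> k'" using Suc.prems by (cases k) auto
  have "(ss ! (r - d)) k' = 0" using Suc.IH[of k'] Suc.prems k' by simp
  moreover have "(ss ! t) (k' + 1) \<le> (ss ! (t+1)) k'" using J_mono[OF ss t1(2) k'(2)] .
  moreover have "0 \<le> (ss ! t) (k' + 1)" using J_nonneg[OF ss] t1 by simp
  ultimately show ?case using t1 k' unfolding t_def by simp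
qed

lemma J_vanish:
  assumes ss: "ss \<in> JSet r n" and t: "t \<le> r" and tk: "r + 1 < t + k"
  shows "(ss ! t) k = 0"
  using J_vanish_aux[OF ss, of "r - t" k] t tk by simp


lemma J_c:
  assumes ss: "ss \<in> JSet r n" and t: "t < r"
  shows "int (\<Sum>k\<in>{k. phi r ss (t+1) (t+1+k) \<noteq> 0}. phi r ss (t+1) (t+1+k)) = (ss ! t) 1"
    "\<And>k. 1 \<le> k \<Longrightarrow> (ss ! (t+1)) k = (ss ! t) (k + 1) + int (phi r ss (t+1) (t+1+k))"
proof -
  obtain c :: "nat \<Rightarrow> nat" where c0: "c 0 = 0"
    and csum: "int (\<Sum>k\<in>{k. c k \<noteq> 0}. c k) = (ss ! t) 1"
    and cst: "\<And>k. 1 \<le> k \<Longrightarrow> (ss ! (t+1)) k = (ss ! t) (k + 1) + int (c k)"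
    using J_step[OF ss t] by blast
  have ceq: "c = (\<lambda>k. phi r ss (t+1) (t+1+k))"
  proof
    fix k :: nat
    consider "k = 0" | "1 \<le> k" "t + 1 + k \<le> r + 1" | "1 \<le> k" "r + 1 < t + 1 + k" by arith
    then show "c k = phi r ss (t+1) (t+1+k)"
    proof cases
      case 1 then show ?thesis using c0 by (simp add: phi_def)
    next
      case 2
      have "phi r ss (t+1) (t+1+k) = nat ((ss ! (t+1)) k - (ss ! t) (k + 1))"
        using 2 by (simp add: phi_def)
      then show ?thesis using cst[OF 2(1)] by simp
    next
      case 3
      have "(ss ! (t+1)) k = 0" using J_vanish[OF ss, of "t+1" k] 3 t by simp
      moreover have "0 \<le> (ss ! t) (k + 1)" using J_nonneg[OF ss, of t] t by simp
      ultimately have "c k = 0" using cst[OF 3(1)] by simp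
      moreover have "phi r ss (t+1) (t+1+k) = 0" using 3 by (simp add: phi_def)
      ultimately show ?thesis by simp
    qed
  qed
  show "int (\<Sum>k\<in>{k. phi r ss (t+1) (t+1+k) \<noteq> 0}. phi r ss (t+1) (t+1+k)) = (ss ! t) 1"
    using csum unfolding ceq .
  show "\<And>k. 1 \<le> k \<Longrightarrow> (ss ! (t+1)) k = (ss ! t) (k + 1) + int (phi r ss (t+1) (t+1+k))"
    using cst unfolding ceq .
qed

lemma J4:
  assumes ss: "ss \<in> JSet r n"
  shows "t \<le> r \<Longrightarrow> ss ! t = st n (phi r ss) t"
proof (induction t)
  case 0
  then show ?case using J_basic(2)[OF ss] st_0 by simp
next
  case (Suc t)
  show ?case
  proof
    fix k :: nat
    show "(ss ! Suc t) k = st n (phi r ss) (Suc t) k"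
    proof (cases "k = 0")
      case True
      then show ?thesis using J_basic(4)[OF ss Suc.prems] unfolding juggling_state_def
        by (simp add: st_def)
    next
      case False
      then have k: "1 \<le> k" by simp
      have "(ss ! Suc t) k = (ss ! t) (k + 1) + int (phi r ss (t+1) (t+1+k))"
        using J_c(2)[OF ss _ k, of t] Suc.prems by simp
      also have "\<dots> = st n (phi r ss) t (k+1) + int (phi r ss (t+1) (t+1+k))"
        using Suc.IH Suc.prems by simp
      also have "\<dots> = st n (phi r ss) (Suc t) k" using st_step[OF k] by simp
      finally show ?thesis .
    qed
  qed
qed

lemma supp_phi: "supp_ok r (phi r ss)"
  unfolding supp_ok_def phi_def by auto

lemma phi_in:
  assumes ss: "ss \<in> JSet r n" and r: "1 \<le> r"
  shows "phi r ss \<in> Fl r n"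
proof -
  define m where "m = phi r ss"
  have s: "supp_ok r m" unfolding m_def by (rule supp_phi)
  have "int (outf r m k) - int (inflow r m k) = int n * (eps 1 k - eps (r+1) k)" for k
  proof -
    consider "k = 0 \<or> r + 1 < k" | "1 \<le> k" "k \<le> r" | "k = r + 1" by arith
    then show ?thesis
    proof cases
      case 1
      have "eps 1 k = 0" "eps (r+1) k = 0" using 1 r by (auto simp: eps_def)
      then show ?thesis using outf_inf_zero[OF s 1] by simp
    next
      case 2
      obtain t where t: "k = t + 1" using 2 by (intro that[of "k - 1"]) simp
      have tr: "t < r" using 2 t by simp
      have "outf r m k = (\<Sum>j\<in>{j. m (t+1) (t+1+j) \<noteq> 0}. m (t+1) (t+1+j))"
        using S1[OF s, of k] t by simp
      then have "int (outf r m k) = (ss ! t) 1" using J_c(1)[OF ss tr] unfolding m_def by simp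
      also have "\<dots> = st n m t 1" using J4[OF ss, of t] tr unfolding m_def by simp
      also have "\<dots> = (if t = 0 then int n else 0) + int (\<Sum>i\<in>{1..t}. m i (t+1))"
        by (simp add: st_def)
      also have "\<dots> = (if t = 0 then int n else 0) + int (inflow r m k)"
        using S2[OF s, of t] tr t by simp
      finally have "int (outf r m k) - int (inflow r m k) = (if t = 0 then int n else 0)" by simp
      moreover have "eps (r+1) k = 0" "eps 1 k = (if t = 0 then 1 else 0)" using 2 t by (auto simp: eps_def)
      ultimately show ?thesis by simp
    next
      case 3
      have "outf r m k = 0" using outf_last[OF s] 3 by simp
      moreover have "int (inflow r m k) = int (\<Sum>i\<in>{1..r}. m i (r+1))" using S2[OF s, of r] 3 by simp
      moreover have "\<dots> = st n m r 1" using r by (simp add: st_def add.commute)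
      moreover have "\<dots> = (ss ! r) 1" using J4[OF ss, of r] unfolding m_def by simp
      moreover have "\<dots> = int n" using J_basic(3)[OF ss] by (simp add: single_state_def)
      moreover have "eps 1 k = 0" "eps (r+1) k = 1" using 3 r by (auto simp: eps_def)
      ultimately show ?thesis by simp
    qed
  qed
  then show ?thesis unfolding Fl_def m_def using supp_phi by blast
qed

lemma psi_phi:
  assumes ss: "ss \<in> JSet r n"
  shows "psi n r (phi r ss) = ss"
proof (rule nth_equalityI)
  show "length (psi n r (phi r ss)) = length ss" using J_basic(1)[OF ss] unfolding psi_def by simp
  fix t assume "t < length (psi n r (phi r ss))"
  then have t: "t \<le> r" unfolding psi_def by simp
  show "psi n r (phi r ss) ! t = ss ! t" using psi_nth[OF t] J4[OF ss t] by simp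
qed

lemma J_bij:
  assumes r: "1 \<le> r"
  shows "bij_betw (phi r) (JSet r n) (Fl r n)"
proof (rule bij_betw_byWitness[where f'="psi n r"])
  show "\<forall>a\<in>JSet r n. psi n r (phi r a) = a" using psi_phi by blast
  show "\<forall>a'\<in>Fl r n. phi r (psi n r a') = a'" using phi_psi by blast
  show "phi r ` JSet r n \<subseteq> Fl r n" using phi_in[OF _ r] by blast
  show "psi n r ` Fl r n \<subseteq> JSet r n" using psi_in[OF _ r] by blast
qed

theorem mainTheorem5:
  fixes r n :: nat
  assumes "r \<ge> 1" and "n \<ge> 1"
  shows "kostant_A r ((\<lambda>k. int n * (eps 1 k - eps (r + 1) k))) =
         js (single_state n) (single_state n) r"
proof -
  have "kostant_A r ((\<lambda>k. int n * (eps 1 k - eps (r + 1) k))) = card (KS r (\<lambda>k. int n * (eps 1 k - eps (r + 1) k)))"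
    unfolding kostant_A_def KS_def by (rule refl)
  also have "\<dots> = card (Fl r n)" by (rule bij_betw_same_card[OF K_bij])
  also have "\<dots> = card (JSet r n)" by (rule bij_betw_same_card[OF J_bij[OF assms(1)], symmetric])
  also have "\<dots> = js (single_state n) (single_state n) r" by (rule js_JSet[symmetric])
  finally show ?thesis .
qed


end
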